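(* Every $3$-fine curve is a circle.
   Context: For nonzero plane vectors $u,v$, $\angle(u,v)\in\mathbb{R}/2\pi\mathbb{Z}$ is the counterclockwise angle from $u$ to $v$. A framed $n$-gon is a tuple $(B_1,\dots,B_n;u_1,\dots,u_n)$ of points $B_i$ in the plane with $B_i\neq B_{i+1}$ and unit vectors $u_i$ satisfying $\angle(u_i,B_{i+1}-B_i)=\angle(B_{i+1}-B_i,u_{i+1})$ for all $i$ (indices mod $n$); $(u_i)$ and $(-u_i)$ are identified. An $n$-fine curve ($n\ge3$) is an oriented closed plane curve $\gamma$ with a one-parameter family of inscribed $n$-gons $B(t)=(B_1(t),\dots,B_n(t))$, $B_j(t)\in\gamma$, such that $(B_1(t),\dots,B_n(t);T_1(t),\dots,T_n(t))$ is a framed $n$-gon, where $T_j(t)$ is the positive unit tangent vector of $\gamma$ at $B_j(t)$, and: (1) each velocity $B_j'(t)$ points in the positive direction of $\gamma$ for all $t,j$; (2) $B_j(t+1)=B_{j+1}(t)$ for all $t,j$; (3) the tangent lines to $\gamma$ at $B_j(t)$ and $B_{j+1}(t)$ are not parallel for all $t,j$. Families are considered up to reparametrization. *)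

theory Defs
  imports "HOL-Analysis.Analysis"
begin

text \<open>Plane = complex numbers. Counterclockwise angle from u to v, as a representative
  in (-pi, pi] of the class in R/2piZ.\<close>
definition ccw_angle :: "complex \<Rightarrow> complex \<Rightarrow> real" where
  "ccw_angle u v = Arg (v / u)"

definition angle_eq_mod :: "real \<Rightarrow> real \<Rightarrow> bool" where
  "angle_eq_mod a b \<longleftrightarrow> (\<exists>k::int. a - b = 2 * pi * of_int k)"

definition framed_ngon :: "nat \<Rightarrow> (nat \<Rightarrow> complex) \<Rightarrow> (nat \<Rightarrow> complex) \<Rightarrow> bool" where
  "framed_ngon n B u \<longleftrightarrow>
     (\<forall>i<n. B i \<noteq> B ((i + 1) mod n) \<and> norm (u i) = 1 \<and>
        angle_eq_mod (ccw_angle (u i) (B ((i + 1) mod n) - B i))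
                     (ccw_angle (B ((i + 1) mod n) - B i) (u ((i + 1) mod n))))"

definition vderiv :: "(real \<Rightarrow> complex) \<Rightarrow> real \<Rightarrow> complex" where
  "vderiv f = (\<lambda>t. vector_derivative f (at t))"

text \<open>Smooth, regular, closed, oriented plane curve with period L > 0
  (orientation = direction of increasing parameter).\<close>
definition smooth_closed_regular_curve :: "(real \<Rightarrow> complex) \<Rightarrow> real \<Rightarrow> bool" where
  "smooth_closed_regular_curve \<gamma> L \<longleftrightarrow>
     L > 0 \<and> (\<forall>t. \<gamma> (t + L) = \<gamma> t) \<and>
     (\<forall>k t. (vderiv ^^ k) \<gamma> differentiable (at t)) \<and>
     (\<forall>t. vderiv \<gamma> t \<noteq> 0)"

definition unit_tangent :: "(real \<Rightarrow> complex) \<Rightarrow> real \<Rightarrow> complex" where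
  "unit_tangent \<gamma> x = vderiv \<gamma> x / complex_of_real (norm (vderiv \<gamma> x))"

text \<open>The inscribed family is given by parameter lifts s j (j < n):
  B_j(t) = \<gamma>(s j t). Condition (1): s j has positive derivative (so B_j' is a positive
  multiple of the positive tangent). Condition (2): B_j(t+1) = B_{j+1}(t), as points of the
  curve, i.e. equal parameters modulo the period.\<close>
definition n_fine_curve :: "nat \<Rightarrow> (real \<Rightarrow> complex) \<Rightarrow> real \<Rightarrow> bool" where
  "n_fine_curve n \<gamma> L \<longleftrightarrow>
     n \<ge> 3 \<and> smooth_closed_regular_curve \<gamma> L \<and>
     (\<exists>s :: nat \<Rightarrow> real \<Rightarrow> real.
        (\<forall>t. framed_ngon n (\<lambda>j. \<gamma> (s j t)) (\<lambda>j. unit_tangent \<gamma> (s j t))) \<and>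
        (\<forall>j<n. \<forall>t. \<exists>d>0. (s j has_real_derivative d) (at t)) \<and>
        (\<forall>j<n. \<forall>t. \<exists>k::int. s j (t + 1) = s ((j + 1) mod n) t + of_int k * L) \<and>
        (\<forall>j<n. \<forall>t. \<not> (\<exists>c::real. unit_tangent \<gamma> (s ((j + 1) mod n) t)
                                   = complex_of_real c * unit_tangent \<gamma> (s j t))))"

end

theory Submission
  imports Defs
begin


lemma angle_cond:
  fixes u v d :: complex
  assumes "norm u = 1" "norm v = 1" "d \<noteq> 0" "angle_eq_mod (ccw_angle u d) (ccw_angle d v)"
  shows "d * d = of_real ((cmod d)^2) * (u * v)"
proof -
  from assms(4) obtain k :: int where k: "Arg (d/u) - Arg (v/d) = 2 * pi * of_int k"
    unfolding angle_eq_mod_def ccw_angle_def by blast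
  have u0: "u \<noteq> 0" "v \<noteq> 0" using assms by auto
  have e: "exp (\<i> * of_real (Arg (d/u))) = exp (\<i> * of_real (Arg (v/d)))"
  proof -
    have r: "Arg (d/u) = Arg (v/d) + real_of_int (2*k) * pi" using k by (simp add: algebra_simps)
    have "\<i> * of_real (Arg (d/u)) = \<i> * of_real (Arg (v/d)) + (of_int (2 * k) * pi) * \<i>"
      unfolding r by (simp add: algebra_simps)
    then show ?thesis unfolding exp_eq by blast
  qed
  have a1: "d/u = of_real (norm (d/u)) * exp (\<i> * of_real (Arg (d/u)))"
    using Arg_eq[of "d/u"] u0 assms by auto
  have a2: "v/d = of_real (norm (v/d)) * exp (\<i> * of_real (Arg (v/d)))"
    using Arg_eq[of "v/d"] u0 assms by auto
  have n1: "norm (d/u) = cmod d" using assms by (simp add: norm_divide)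
  have n2: "norm (v/d) = 1 / cmod d" using assms by (simp add: norm_divide)
  have "d/u = of_real ((cmod d)^2) * (v/d)"
    using a1 a2 e n1 n2 assms(3) by (simp add: power2_eq_square field_simps)
  then show ?thesis using u0 assms(3) by (simp add: field_simps power2_eq_square)
qed



definition cc :: "complex \<Rightarrow> complex \<Rightarrow> complex \<Rightarrow> complex" where
  "cc a b z = a + ((b-a)*cnj(b-a)*(z-a) - (z-a)*cnj(z-a)*(b-a)) / (cnj(b-a)*(z-a) - (b-a)*cnj(z-a))"

lemma D_nz:
  fixes p q :: complex
  assumes "Im (cnj p * q) \<noteq> 0"
  shows "cnj p * q - p * cnj q \<noteq> 0"
proof
  assume "cnj p * q - p * cnj q = 0"
  then have "Im (cnj p * q - p * cnj q) = 0" by simp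
  then show False using assms by (auto simp: mult.commute)
qed

lemma cc_aux:
  fixes p q :: complex
  assumes D: "cnj p * q - p * cnj q \<noteq> 0"
  defines "x \<equiv> (p*cnj p*q - q*cnj q*p) / (cnj p*q - p*cnj q)"
  shows "x * cnj x = (x - p) * cnj (x - p)"
proof -
  have D': "p * cnj q - cnj p * q \<noteq> 0" using D by (metis eq_iff_diff_eq_0)
  have "cnj x = (cnj p*p*cnj q - cnj q*q*cnj p) / (p*cnj q - cnj p*q)"
    unfolding x_def by simp
  then show ?thesis unfolding x_def using D D'
    by (simp add: field_simps)
qed

lemma cc_prop:
  fixes a b z :: complex
  assumes "Im (cnj (b-a) * (z-a)) \<noteq> 0"
  shows "(b - cc a b z) * cnj (b - cc a b z) = (a - cc a b z) * cnj (a - cc a b z)"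
    and "(z - cc a b z) * cnj (z - cc a b z) = (a - cc a b z) * cnj (a - cc a b z)"
proof -
  let ?p = "b - a" and ?q = "z - a"
  define x where "x = (?p*cnj ?p*?q - ?q*cnj ?q*?p) / (cnj ?p*?q - ?p*cnj ?q)"
  have D: "cnj ?p * ?q - ?p * cnj ?q \<noteq> 0" using D_nz assms by blast
  have c: "cc a b z = a + x" unfolding cc_def x_def by simp
  have "x * cnj x = (x - ?p) * cnj (x - ?p)" unfolding x_def by (rule cc_aux[OF D])
  then show "(b - cc a b z) * cnj (b - cc a b z) = (a - cc a b z) * cnj (a - cc a b z)"
    unfolding c by (simp add: algebra_simps)
  have D2: "cnj ?q * ?p - ?q * cnj ?p \<noteq> 0" using D by (metis eq_iff_diff_eq_0 mult.commute)
  have ex: "x = (?q*cnj ?q*?p - ?p*cnj ?p*?q) / (cnj ?q*?p - ?q*cnj ?p)"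
    unfolding x_def using D D2 by (simp add: field_simps)
  have "x * cnj x = (x - ?q) * cnj (x - ?q)" unfolding ex by (rule cc_aux[OF D2])
  then show "(z - cc a b z) * cnj (z - cc a b z) = (a - cc a b z) * cnj (a - cc a b z)"
    unfolding c by (simp add: algebra_simps)
qed

lemma pair:
  fixes w0 w1 u0 u1 R :: complex
  assumes "w0 * cnj w0 = R" "w1 * cnj w1 = R" "R \<noteq> 0" "w1 \<noteq> w0"
    "(w1-w0)*(w1-w0) = (w1-w0)*cnj(w1-w0)*(u0*u1)"
  shows "w0*w1 = -R*(u0*u1)"
proof -
  have w0: "w0 \<noteq> 0" and w1: "w1 \<noteq> 0" using assms by auto
  have d: "w1 - w0 = cnj (w1 - w0) * (u0*u1)" using assms(4,5)
    by (metis (no_types, lifting) eq_iff_diff_eq_0 mult.assoc mult_left_cancel)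
  have c0: "cnj w0 = R / w0" using assms(1) w0 by (simp add: field_simps)
  have c1: "cnj w1 = R / w1" using assms(2) w1 by (simp add: field_simps)
  have "w1 - w0 = (R/w1 - R/w0) * (u0*u1)" using d c0 c1 by simp
  then have "(w1 - w0) * (w0*w1) = (w1 - w0) * (- R*(u0*u1))" using w0 w1
    by (simp add: field_simps)
  then have "(w1 - w0) * (w0*w1 + R*(u0*u1)) = 0" by (simp add: algebra_simps)
  then show ?thesis using assms(4) by (simp add: add_eq_0_iff)
qed

lemma tri:
  fixes w0 w1 w2 u0 u1 u2 :: complex and R :: real
  assumes "w0*w1 = - of_real R*(u0*u1)" "w1*w2 = - of_real R*(u1*u2)" "w2*w0 = - of_real R*(u2*u0)" "R > 0"
    "w0 \<noteq> 0" "w1 \<noteq> 0" "w2 \<noteq> 0"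
  shows "Re (w0 * cnj u0) = 0"
proof -
  define \<delta> where "\<delta> = u0 / w0"
  have u1: "u1 \<noteq> 0" using assms by auto
  have R0: "complex_of_real R \<noteq> 0" using assms by simp
  have e1: "u0*u1 = -(w0*w1)/R" and e2: "u1*u2 = -(w1*w2)/R" and e3: "u2*u0 = -(w2*w0)/R"
    using assms R0 by (simp_all add: field_simps)
  have "u0 * u0 * (u1*u2) = (u0*u1)*(u2*u0)" by (simp add: algebra_simps)
  then have "u0 * u0 * (-(w1*w2)/R) = (-(w0*w1)/R) * (-(w2*w0)/R)"
    unfolding e1 e2 e3 .
  then have "u0 * u0 * (-(w1*w2)) * R = (w0*w0)*(w1*w2)"
    using R0 by (simp add: field_simps)
  then have "(u0*u0*R + w0*w0)*(w1*w2) = 0" by algebra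
  then have "u0*u0*R = -(w0*w0)" using assms(6,7) by (simp add: add_eq_0_iff)
  then have "\<delta> * \<delta> = - 1 / R" unfolding \<delta>_def using assms(5) R0
    by (simp add: field_simps)
  then have "Re (\<delta>*\<delta>) < 0" "Im (\<delta>*\<delta>) = 0" using assms(4) by simp_all
  then have "Re \<delta> = 0"
    by (simp add: power2_eq_square) (smt (verit) mult_eq_0_iff zero_le_square)
  have "w0 * cnj u0 = (w0 * cnj w0) * cnj \<delta>" unfolding \<delta>_def using assms(5)
    by (simp add: field_simps)
  also have "w0 * cnj w0 = of_real ((cmod w0)^2)" by (simp add: complex_norm_square[symmetric])
  finally show ?thesis using \<open>Re \<delta> = 0\<close> by simp
qed



lemma scal:
  fixes p w :: complex and \<mu> :: real
  assumes "\<mu> \<noteq> 0" "(of_real \<mu> * p)*(of_real \<mu>*p) = of_real((cmod (of_real \<mu> * p))^2)*w"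
  shows "p*p = of_real((cmod p)^2)*w"
proof -
  have "of_real (\<mu>*\<mu>) * (p*p) = of_real (\<mu>*\<mu>) * (of_real((cmod p)^2)*w)"
  proof -
    have aa: "complex_of_real \<bar>\<mu>\<bar> * of_real \<bar>\<mu>\<bar> = of_real \<mu> * of_real \<mu>"
      by (metis abs_mult_self_eq of_real_mult)
    show ?thesis using assms(2) by (simp add: norm_mult power2_eq_square algebra_simps aa)
  qed
  then show ?thesis using assms(1) by simp
qed

lemma noncollinear:
  fixes b0 b1 b2 u0 u1 u2 :: complex
  assumes "b1 \<noteq> b0" "b2 \<noteq> b1" "b0 \<noteq> b2"
    "(b1-b0)*(b1-b0) = of_real((cmod (b1-b0))^2)*(u0*u1)"
    "(b2-b1)*(b2-b1) = of_real((cmod (b2-b1))^2)*(u1*u2)"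
    "(b0-b2)*(b0-b2) = of_real((cmod (b0-b2))^2)*(u2*u0)"
    "u0 \<noteq> 0" "u1 \<noteq> 0" "u2 \<noteq> 0" "u1 \<noteq> u0"
  shows "Im (cnj (b1-b0) * (b2-b0)) \<noteq> 0"
proof
  assume im: "Im (cnj (b1-b0) * (b2-b0)) = 0"
  define p where "p = b1 - b0"
  have p0: "p \<noteq> 0" using assms p_def by auto
  have np: "complex_of_real ((cmod p)^2) \<noteq> 0" using p0 by simp
  obtain r where e: "cnj p * (b2 - b0) = of_real r" using im p_def
    by (metis complex_is_Real_iff of_real_Re)
  define lam where "lam = r / (cmod p)^2"
  have q: "b2 - b0 = of_real lam * p"
  proof -
    have "of_real ((cmod p)^2) * (b2-b0) = p * cnj p * (b2 - b0)" by (simp add: complex_norm_square[symmetric])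
    also have "\<dots> = p * of_real r" using e by (simp add: mult.assoc)
    finally have "of_real ((cmod p)^2) * (b2-b0) = p * of_real r" .
    then show ?thesis unfolding lam_def using np by (simp add: field_simps)
  qed
  have l0: "lam \<noteq> 0" using q assms(3) by auto
  have l1: "lam - 1 \<noteq> 0" using q assms(2) p_def by (auto simp: algebra_simps)
  have d12: "b2 - b1 = of_real (lam - 1) * p"
  proof -
    have "b2 - b1 = (b2 - b0) - p" using p_def by simp
    then show ?thesis unfolding q by (simp add: algebra_simps)
  qed
  have d20: "b0 - b2 = of_real (-lam) * p" using q by (simp add: algebra_simps)
  have E1: "p*p = of_real((cmod p)^2)*(u0*u1)" using assms(4) p_def by simp
  have E2': "(of_real (lam-1)*p)*(of_real (lam-1)*p) = of_real((cmod(of_real (lam-1)*p))^2)*(u1*u2)"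
    using assms(5) unfolding d12 .
  have E2: "p*p = of_real((cmod p)^2)*(u1*u2)" by (rule scal[OF l1 E2'])
  have l0': "-lam \<noteq> 0" using l0 by simp
  have E3': "(of_real (-lam)*p)*(of_real (-lam)*p) = of_real((cmod(of_real (-lam)*p))^2)*(u2*u0)"
    using assms(6) unfolding d20 .
  have E3: "p*p = of_real((cmod p)^2)*(u2*u0)" by (rule scal[OF l0' E3'])
  have "u0*u1 = u1*u2" using mult_left_cancel[OF np, THEN iffD1, OF trans[OF E1[symmetric] E2]] .
  then have "u1*u0 = u1*u2" by (simp only: mult.commute)
  then have "u0 = u2" using assms(8) by simp
  have "u1*u2 = u2*u0" using mult_left_cancel[OF np, THEN iffD1, OF trans[OF E2[symmetric] E3]] .
  then have "u2*u1 = u2*u0" by (simp only: mult.commute)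
  then have "u1 = u0" using assms(9) by simp
  then show False using assms(10) by simp
qed

lemma lin0:
  fixes p q x :: complex
  assumes "Re (p * cnj x) = 0" "Re (q * cnj x) = 0" "Im (cnj p * q) \<noteq> 0"
  shows "x = 0"
proof -
  have a: "Re p * Re x + Im p * Im x = 0" "Re q * Re x + Im q * Im x = 0" using assms by simp_all
  have d: "Re p * Im q - Im p * Re q \<noteq> 0" using assms(3) by (simp add: algebra_simps)
  have "Re x * (Re p * Im q - Im p * Re q) = Im q * (Re p * Re x + Im p * Im x) - Im p * (Re q * Re x + Im q * Im x)"
    by (simp add: algebra_simps)
  then have "Re x = 0" using a d by simp
  have "Im x * (Re p * Im q - Im p * Re q) = Re p * (Re q * Re x + Im q * Im x) - Re q * (Re p * Re x + Im p * Im x)"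
    by (simp add: algebra_simps)
  then have "Im x = 0" using a d by simp
  then show ?thesis using \<open>Re x = 0\<close> by (simp add: complex_eq_iff)
qed



lemma ang':
  fixes u v d :: complex
  assumes "norm u = 1" "norm v = 1" "d \<noteq> 0" "angle_eq_mod (ccw_angle u d) (ccw_angle d v)"
  shows "d * d = d * cnj d * (u * v)"
  using angle_cond[OF assms] unfolding complex_norm_square .

lemma geom:
  fixes b u :: "nat \<Rightarrow> complex"
  assumes fr: "framed_ngon 3 b u"
    and np: "\<forall>j<3. \<not> (\<exists>c::real. u ((j+1) mod 3) = of_real c * u j)"
  shows "Im (cnj (b 1 - b 0) * (b 2 - b 0)) \<noteq> 0"
    and "\<forall>j<3. Re ((b j - cc (b 0) (b 1) (b 2)) * cnj (u j)) = 0"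
proof -
  have H: "\<And>i. i < 3 \<Longrightarrow> b i \<noteq> b ((i + 1) mod 3) \<and> norm (u i) = 1 \<and>
        angle_eq_mod (ccw_angle (u i) (b ((i + 1) mod 3) - b i))
                     (ccw_angle (b ((i + 1) mod 3) - b i) (u ((i + 1) mod 3)))"
    using fr unfolding framed_ngon_def by blast
  have m: "((0::nat)+1) mod 3 = 1" "((1::nat)+1) mod 3 = 2" "((2::nat)+1) mod 3 = 0" by simp_all
  have f0: "b 0 \<noteq> b 1" "norm (u 0) = 1"
       "angle_eq_mod (ccw_angle (u 0) (b 1 - b 0)) (ccw_angle (b 1 - b 0) (u 1))"
    using H[of 0] unfolding m by auto
  have f1: "b 1 \<noteq> b 2" "norm (u 1) = 1"
       "angle_eq_mod (ccw_angle (u 1) (b 2 - b 1)) (ccw_angle (b 2 - b 1) (u 2))"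
    using H[of 1] unfolding m by auto
  have f2: "b 2 \<noteq> b 0" "norm (u 2) = 1"
       "angle_eq_mod (ccw_angle (u 2) (b 0 - b 2)) (ccw_angle (b 0 - b 2) (u 0))"
    using H[of 2] unfolding m by auto
  have E01: "(b 1 - b 0)*(b 1 - b 0) = of_real((cmod (b 1 - b 0))^2)*(u 0*u 1)"
    using angle_cond[OF f0(2) f1(2) _ f0(3)] f0(1) by simp
  have E12: "(b 2 - b 1)*(b 2 - b 1) = of_real((cmod (b 2 - b 1))^2)*(u 1*u 2)"
    using angle_cond[OF f1(2) f2(2) _ f1(3)] f1(1) by simp
  have E20: "(b 0 - b 2)*(b 0 - b 2) = of_real((cmod (b 0 - b 2))^2)*(u 2*u 0)"
    using angle_cond[OF f2(2) f0(2) _ f2(3)] f2(1) by simp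
  have F01: "(b 1 - b 0)*(b 1 - b 0) = (b 1 - b 0)*cnj(b 1 - b 0)*(u 0*u 1)"
    by (rule ang'[OF f0(2) f1(2) _ f0(3)]) (use f0(1) in simp)
  have F12: "(b 2 - b 1)*(b 2 - b 1) = (b 2 - b 1)*cnj(b 2 - b 1)*(u 1*u 2)"
    by (rule ang'[OF f1(2) f2(2) _ f1(3)]) (use f1(1) in simp)
  have F20: "(b 0 - b 2)*(b 0 - b 2) = (b 0 - b 2)*cnj(b 0 - b 2)*(u 2*u 0)"
    by (rule ang'[OF f2(2) f0(2) _ f2(3)]) (use f2(1) in simp)
  have u10: "u 1 \<noteq> u 0"
  proof
    assume "u 1 = u 0"
    then have "u ((0+1) mod 3) = of_real 1 * u 0" by simp
    then show False using np[rule_format, of 0] by auto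
  qed
  have nz: "u 0 \<noteq> 0" "u 1 \<noteq> 0" "u 2 \<noteq> 0" using f0 f1 f2 by auto
  show NC: "Im (cnj (b 1 - b 0) * (b 2 - b 0)) \<noteq> 0"
    by (rule noncollinear[OF _ _ _ E01 E12 E20 nz u10]) (use f0 f1 f2 in auto)
  define c where "c = cc (b 0) (b 1) (b 2)"
  define w where "w = (\<lambda>j. b j - c)"
  define R where "R = (cmod (w 0))^2"
  have R0: "w 0 * cnj (w 0) = of_real R" unfolding R_def by (rule complex_norm_square[symmetric])
  have R1: "w 1 * cnj (w 1) = of_real R" using cc_prop(1)[OF NC] R0 unfolding w_def c_def by simp
  have R2: "w 2 * cnj (w 2) = of_real R" using cc_prop(2)[OF NC] R0 unfolding w_def c_def by simp
  have Rnz: "R \<noteq> 0"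
  proof
    assume "R = 0"
    then have "w 0 = 0" "w 1 = 0" using R0 R1 by auto
    then show False using f0(1) unfolding w_def by simp
  qed
  have Rpos: "R > 0" using Rnz unfolding R_def by simp
  have Rc: "complex_of_real R \<noteq> 0" using Rnz by simp
  have wnz: "w 0 \<noteq> 0" "w 1 \<noteq> 0" "w 2 \<noteq> 0" using R0 R1 R2 Rc by auto
  have d01: "w 1 - w 0 = b 1 - b 0" "w 2 - w 1 = b 2 - b 1" "w 0 - w 2 = b 0 - b 2"
    unfolding w_def by simp_all
  have n01: "w 1 \<noteq> w 0" and n12: "w 2 \<noteq> w 1" and n20: "w 0 \<noteq> w 2"
    using f0(1) f1(1) f2(1) unfolding w_def by auto
  have P01: "w 0 * w 1 = - of_real R * (u 0 * u 1)"
    using pair[OF R0 R1 Rc n01 F01[folded d01(1)]] .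
  have P12: "w 1 * w 2 = - of_real R * (u 1 * u 2)"
    using pair[OF R1 R2 Rc n12 F12[folded d01(2)]] .
  have P20: "w 2 * w 0 = - of_real R * (u 2 * u 0)"
    using pair[OF R2 R0 Rc n20 F20[folded d01(3)]] .
  have T0: "Re (w 0 * cnj (u 0)) = 0" by (rule tri[OF P01 P12 P20 Rpos wnz])
  have T1: "Re (w 1 * cnj (u 1)) = 0" by (rule tri[OF P12 P20 P01 Rpos wnz(2,3,1)])
  have T2: "Re (w 2 * cnj (u 2)) = 0" by (rule tri[OF P20 P01 P12 Rpos wnz(3,1,2)])
  show "\<forall>j<3. Re ((b j - cc (b 0) (b 1) (b 2)) * cnj (u j)) = 0"
  proof (intro allI impI)
    fix j :: nat assume "j < 3"
    then have "j = 0 \<or> j = 1 \<or> j = 2" by auto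
    then show "Re ((b j - cc (b 0) (b 1) (b 2)) * cnj (u j)) = 0"
      using T0 T1 T2 unfolding w_def c_def by auto
  qed
qed



lemma qderiv:
  fixes f :: "real \<Rightarrow> complex"
  assumes "(f has_vector_derivative f') (at t)"
  shows "((\<lambda>\<tau>. f \<tau> * cnj (f \<tau>)) has_vector_derivative (f t * cnj f' + f' * cnj (f t))) (at t)"
  using has_vector_derivative_mult[OF assms has_vector_derivative_cnj[OF assms]] by simp

lemma alg_c:
  fixes w0 w1 b0 b1 x :: complex
  assumes "w1*cnj(b1 - x) + (b1 - x)*cnj w1 = w0*cnj(b0 - x) + (b0 - x)*cnj w0"
    "Re (w1*cnj b1) = 0" "Re (w0*cnj b0) = 0"
  shows "Re ((w1 - w0)*cnj x) = 0"
proof -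
  have "Re (w1*cnj(b1 - x) + (b1 - x)*cnj w1) = Re (w0*cnj(b0 - x) + (b0 - x)*cnj w0)"
    using assms(1) by simp
  then show ?thesis using assms(2,3) by (simp add: algebra_simps)
qed

lemma recnj: "Re z = 0 \<Longrightarrow> z + cnj z = 0"
  by (simp add: complex_eq_iff)

lemma per_nat:
  assumes "\<And>t. g (t + L) = g t"
  shows "g (x + real m * L) = g x"
proof (induction m)
  case 0 then show ?case by simp
next
  case (Suc m)
  have "g (x + real (Suc m) * L) = g ((x + real m * L) + L)" by (simp add: algebra_simps)
  then show ?case using assms Suc by simp
qed

lemma per_int:
  assumes "\<And>t. g (t + L) = g t"
  shows "g (x + real_of_int n * L) = g x"
proof (cases "n \<ge> 0")
  case True
  then obtain m where "n = int m" using nonneg_int_cases by blast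
  then show ?thesis using per_nat[of g L, OF assms] by simp
next
  case False
  define m where "m = nat (- n)"
  have m: "n = - int m" using False unfolding m_def by simp
  have "g x = g ((x + real_of_int n * L) + real m * L)" using m by simp
  also have "\<dots> = g (x + real_of_int n * L)" by (rule per_nat[of g L, OF assms])
  finally show ?thesis by simp
qed

lemma cayley_real:
  fixes z :: complex
  assumes "cmod z = 1" "z \<noteq> 1"
  shows "Im (\<i>*(1+z)/(1-z)) = 0"
proof -
  have z0: "z \<noteq> 0" using assms by auto
  have cz: "cnj z = 1 / z" using assms z0 complex_norm_square[of z]
    by (simp add: field_simps)
  have n: "1 - z \<noteq> 0" using assms by simp
  have n2: "z - 1 \<noteq> 0" using assms by simp
  have "cnj (\<i>*(1+z)/(1-z)) = \<i>*(1+z)/(1-z)"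
    using z0 n n2 by (simp add: cz field_simps)
  then show ?thesis by (metis Reals_cnj_iff complex_is_Real_iff)
qed

lemma cayley_deriv:
  fixes z :: complex
  assumes "z \<noteq> 1"
  shows "((\<lambda>z. \<i>*(1+z)/(1-z)) has_field_derivative (2*\<i>/(1-z)^2)) (at z)"
proof -
  have n: "1 - z \<noteq> 0" using assms by simp
  show ?thesis
    apply (rule derivative_eq_intros refl)+
    using n apply (auto simp: field_simps power2_eq_square)
    done
qed



theorem proposition6p1:
  fixes \<gamma> :: "real \<Rightarrow> complex" and L :: real
  assumes "n_fine_curve 3 \<gamma> L"
  shows "\<exists>c r. r > 0 \<and> range \<gamma> = sphere c r"
proof -
  from assms obtain s where
    fr: "\<forall>t. framed_ngon 3 (\<lambda>j. \<gamma> (s j t)) (\<lambda>j. unit_tangent \<gamma> (s j t))"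
    and der: "\<forall>j<3. \<forall>t. \<exists>d>0. (s j has_real_derivative d) (at t)"
    and per: "\<forall>j<3. \<forall>t. \<exists>k::int. s j (t + 1) = s ((j + 1) mod 3) t + of_int k * L"
    and np: "\<forall>j<3. \<forall>t. \<not> (\<exists>c::real. unit_tangent \<gamma> (s ((j + 1) mod 3) t)
                                   = complex_of_real c * unit_tangent \<gamma> (s j t))"
    and sm: "smooth_closed_regular_curve \<gamma> L"
    unfolding n_fine_curve_def by blast
  have Lpos: "L > 0" and gper: "\<And>t. \<gamma> (t + L) = \<gamma> t" and reg: "\<And>t. vderiv \<gamma> t \<noteq> 0"
    using sm unfolding smooth_closed_regular_curve_def by auto
  have gdiff: "\<And>t. \<gamma> differentiable (at t)"
    using sm unfolding smooth_closed_regular_curve_def by (metis funpow_0)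
  have gvd: "\<And>x. (\<gamma> has_vector_derivative vderiv \<gamma> x) (at x)"
    using gdiff unfolding vderiv_def vector_derivative_works .
  define B where "B = (\<lambda>j t. \<gamma> (s j t))"
  define U where "U = (\<lambda>j t. unit_tangent \<gamma> (s j t))"
  define c where "c = (\<lambda>t. cc (B 0 t) (B 1 t) (B 2 t))"
  have GEO: "Im (cnj (B 1 t - B 0 t) * (B 2 t - B 0 t)) \<noteq> 0 \<and>
     (\<forall>j<3. Re ((B j t - c t) * cnj (U j t)) = 0)" for t
  proof -
    have np_t: "\<forall>j<3. \<not> (\<exists>c::real. (\<lambda>j. unit_tangent \<gamma> (s j t)) ((j+1) mod 3)
           = of_real c * (\<lambda>j. unit_tangent \<gamma> (s j t)) j)"
      using np by blast
    have fr_t: "framed_ngon 3 (\<lambda>j. \<gamma> (s j t)) (\<lambda>j. unit_tangent \<gamma> (s j t))"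
      using fr by blast
    show ?thesis using geom[OF fr_t np_t] unfolding B_def U_def c_def by simp
  qed
  have NC: "\<And>t. Im (cnj (B 1 t - B 0 t) * (B 2 t - B 0 t)) \<noteq> 0" using GEO by blast
  have TG: "\<And>t j. j < 3 \<Longrightarrow> Re ((B j t - c t) * cnj (U j t)) = 0" using GEO by blast
  have BD: "\<And>j t. j < 3 \<Longrightarrow> \<exists>d>0. ((B j) has_vector_derivative (of_real d * vderiv \<gamma> (s j t))) (at t)"
  proof -
    fix j t assume j: "j < (3::nat)"
    obtain d where d: "d > 0" "(s j has_real_derivative d) (at t)" using der j by blast
    have "((\<gamma> \<circ> s j) has_vector_derivative (d *\<^sub>R vderiv \<gamma> (s j t))) (at t)"
      by (rule vector_diff_chain_at[OF d(2)[unfolded has_real_derivative_iff_has_vector_derivative] gvd])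
    then have "((B j) has_vector_derivative (of_real d * vderiv \<gamma> (s j t))) (at t)"
      unfolding B_def by (simp add: o_def scaleR_conv_of_real)
    then show "\<exists>d>0. ((B j) has_vector_derivative (of_real d * vderiv \<gamma> (s j t))) (at t)"
      using d(1) by blast
  qed
  have TGD: "\<And>j t d. j < 3 \<Longrightarrow> Re ((B j t - c t) * cnj (of_real d * vderiv \<gamma> (s j t))) = 0"
  proof -
    fix j t and d :: real assume j: "j < (3::nat)"
    have v: "vderiv \<gamma> (s j t) = of_real (cmod (vderiv \<gamma> (s j t))) * U j t"
      unfolding U_def unit_tangent_def using reg by simp
    have e: "(B j t - c t) * cnj (of_real d * vderiv \<gamma> (s j t))
        = of_real (d * cmod (vderiv \<gamma> (s j t))) * ((B j t - c t) * cnj (U j t))"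
      by (subst v) (simp add: algebra_simps)
    have r: "\<And>k z. Re z = 0 \<Longrightarrow> Re (complex_of_real k * z) = 0" by simp
    show "Re ((B j t - c t) * cnj (of_real d * vderiv \<gamma> (s j t))) = 0"
      unfolding e by (rule r[OF TG[OF j, of t]])
  qed
  have Bdiff: "\<And>j t. j < 3 \<Longrightarrow> B j differentiable (at t)"
    using BD differentiableI_vector by blast
  have cdiff: "\<And>t. c differentiable (at t)"
  proof -
    fix t
    have den: "cnj (B 1 t - B 0 t) * (B 2 t - B 0 t) - (B 1 t - B 0 t) * cnj (B 2 t - B 0 t) \<noteq> 0"
      by (rule D_nz[OF NC])
    have d0: "B 0 differentiable (at t)" "B 1 differentiable (at t)" "B 2 differentiable (at t)"
      using Bdiff by auto
    have dc: "(\<lambda>t. cnj (B j t - B 0 t)) differentiable (at t)" if "j < 3" for j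
    proof -
      have "(\<lambda>t. B j t - B 0 t) differentiable (at t)" using Bdiff that d0 by (intro derivative_intros) auto
      then show ?thesis by (rule differentiable_cnj_iff[THEN iffD2])
    qed
    show "c differentiable (at t)"
      unfolding c_def cc_def
      using den d0 dc[of 1] dc[of 2]
      by (intro derivative_intros) auto
  qed

  define c' where "c' = (\<lambda>t. vector_derivative c (at t))"
  have cvd: "\<And>t. (c has_vector_derivative c' t) (at t)"
    using cdiff unfolding c'_def vector_derivative_works .
  have Qeq: "\<And>j \<tau>. j < 3 \<Longrightarrow> (B j \<tau> - c \<tau>) * cnj (B j \<tau> - c \<tau>) = (B 0 \<tau> - c \<tau>) * cnj (B 0 \<tau> - c \<tau>)"
  proof -
    fix j :: nat and \<tau> assume "j < 3"
    then have "j = 0 \<or> j = 1 \<or> j = 2" by auto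
    then show "(B j \<tau> - c \<tau>) * cnj (B j \<tau> - c \<tau>) = (B 0 \<tau> - c \<tau>) * cnj (B 0 \<tau> - c \<tau>)"
      using cc_prop[OF NC[of \<tau>]] unfolding c_def by auto
  qed
  have c'0: "\<And>t. c' t = 0"
  proof -
    fix t
    have key: "Re ((B j t - B 0 t) * cnj (c' t)) = 0" if j: "j < 3" for j
    proof -
      obtain dj where dj: "dj > 0" "(B j has_vector_derivative (of_real dj * vderiv \<gamma> (s j t))) (at t)"
        using BD[OF j] by blast
      obtain d0 where d0: "d0 > 0" "(B 0 has_vector_derivative (of_real d0 * vderiv \<gamma> (s 0 t))) (at t)"
        using BD[of 0] by auto
      have wj: "((\<lambda>\<tau>. B j \<tau> - c \<tau>) has_vector_derivative (of_real dj * vderiv \<gamma> (s j t) - c' t)) (at t)"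
        using dj(2) cvd by (rule has_vector_derivative_diff)
      have w0: "((\<lambda>\<tau>. B 0 \<tau> - c \<tau>) has_vector_derivative (of_real d0 * vderiv \<gamma> (s 0 t) - c' t)) (at t)"
        using d0(2) cvd by (rule has_vector_derivative_diff)
      have fe: "(\<lambda>\<tau>. (B j \<tau> - c \<tau>) * cnj (B j \<tau> - c \<tau>)) = (\<lambda>\<tau>. (B 0 \<tau> - c \<tau>) * cnj (B 0 \<tau> - c \<tau>))"
        using Qeq[OF j] by auto
      note D1 = qderiv[OF wj, unfolded fe]
      note D0 = qderiv[OF w0]
      note eq = vector_derivative_unique_at[OF D1 D0]
      have "Re (((B j t - c t) - (B 0 t - c t)) * cnj (c' t)) = 0"
        by (rule alg_c[OF eq TGD[OF j] TGD[of 0]]) simp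
      then show ?thesis by simp
    qed
    show "c' t = 0" by (rule lin0[OF key[of 1] key[of 2] NC]) simp_all
  qed
  have cv0: "\<And>t. (c has_vector_derivative 0) (at t)" using cvd c'0 by metis
  obtain c0 where c0': "\<And>x. x \<in> UNIV \<Longrightarrow> c x = c0"
    by (rule has_vector_derivative_zero_constant[of UNIV c]) (auto simp: cv0)
  have c0: "\<And>x. c x = c0" using c0' by simp
  have qd: "((\<lambda>\<tau>. (B 0 \<tau> - c0) * cnj (B 0 \<tau> - c0)) has_vector_derivative 0) (at t)" for t
  proof -
    obtain d0 where d0: "d0 > 0" "(B 0 has_vector_derivative (of_real d0 * vderiv \<gamma> (s 0 t))) (at t)"
      using BD[of 0] by auto
    let ?b = "of_real d0 * vderiv \<gamma> (s 0 t)"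
    have w: "((\<lambda>\<tau>. B 0 \<tau> - c0) has_vector_derivative ?b) (at t)"
      using d0(2) has_vector_derivative_diff_const by blast
    have z: "Re ((B 0 t - c0) * cnj ?b) = 0" using TGD[of 0 t d0] c0 by simp
    have "(B 0 t - c0) * cnj ?b + ?b * cnj (B 0 t - c0) = (B 0 t - c0) * cnj ?b + cnj ((B 0 t - c0) * cnj ?b)"
      by simp
    also have "\<dots> = 0" by (rule recnj[OF z])
    finally show ?thesis using qderiv[OF w] by simp
  qed
  obtain K where K': "\<And>x. x \<in> UNIV \<Longrightarrow> (B 0 x - c0) * cnj (B 0 x - c0) = K"
    by (rule has_vector_derivative_zero_constant[of UNIV "\<lambda>\<tau>. (B 0 \<tau> - c0) * cnj (B 0 \<tau> - c0)"])
      (blast intro: qd convex_UNIV)+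
  have K: "\<And>x. (B 0 x - c0) * cnj (B 0 x - c0) = K" using K' by simp
  define r where "r = cmod (B 0 0 - c0)"
  have sqn: "\<And>z w. z * cnj z = w * cnj w \<Longrightarrow> cmod z = cmod w"
  proof -
    fix z w :: complex assume "z * cnj z = w * cnj w"
    then have "complex_of_real ((cmod z)^2) = of_real ((cmod w)^2)" by (simp only: complex_norm_square)
    then have "(cmod z)^2 = (cmod w)^2" by (simp only: of_real_eq_iff)
    then show "cmod z = cmod w" by (rule power2_eq_imp_eq) simp_all
  qed
  have rad: "\<And>x. cmod (B 0 x - c0) = r" unfolding r_def by (rule sqn) (simp only: K)
  have rad1: "cmod (B 1 x - c0) = r" for x
  proof -
    have "(B 1 x - c0)*cnj(B 1 x - c0) = (B 0 x - c0)*cnj(B 0 x - c0)" using Qeq[of 1 x] c0 by simp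
    then have "cmod (B 1 x - c0) = cmod (B 0 x - c0)" by (rule sqn)
    then show ?thesis using rad by simp
  qed
  have b01: "B 0 0 \<noteq> B 1 0"
    using fr[rule_format, of 0] unfolding framed_ngon_def B_def by (auto dest: spec[of _ 0])
  have rpos: "r > 0"
  proof (rule ccontr)
    assume "\<not> r > 0"
    then have "r = 0" using rad[of 0] by (metis norm_ge_zero order_le_less)
    then have "B 0 0 = c0" "B 1 0 = c0" using rad[of 0] rad1[of 0] by auto
    then show False using b01 by simp
  qed
  have s0der: "\<exists>y. DERIV (s 0) x :> y \<and> y > 0" for x using der[rule_format, of 0 x] by auto
  have s0inc: "\<And>a b. a < b \<Longrightarrow> s 0 a < s 0 b"
    by (rule DERIV_pos_imp_increasing) (use s0der in auto)
  have s0cont: "\<And>x. isCont (s 0) x" using s0der DERIV_isCont by blast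
  have m: "\<exists>m::int. s 0 3 = s 0 0 + of_int m * L"
  proof -
    obtain k1 :: int where k1: "s 0 (2 + 1) = s ((0+1) mod 3) 2 + of_int k1 * L"
      using per[rule_format, of 0 2] by auto
    obtain k2 :: int where k2: "s 1 (1 + 1) = s ((1+1) mod 3) 1 + of_int k2 * L"
      using per[rule_format, of 1 1] by auto
    obtain k3 :: int where k3: "s 2 (0 + 1) = s ((2+1) mod 3) 0 + of_int k3 * L"
      using per[rule_format, of 2 0] by auto
    have mm: "((0::nat)+1) mod 3 = 1" "((1::nat)+1) mod 3 = 2" "((2::nat)+1) mod 3 = 0"
      "(2::real)+1 = 3" "(1::real)+1 = 2" "(0::real)+1 = 1" by simp_all
    have "s 0 3 = s 0 0 + of_int (k1 + k2 + k3) * L"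
      using k1[unfolded mm] k2[unfolded mm] k3[unfolded mm] by (simp add: algebra_simps)
    then show ?thesis by blast
  qed
  then obtain m :: int where m: "s 0 3 = s 0 0 + of_int m * L" by blast
  have "s 0 0 < s 0 3" by (rule s0inc) simp
  then have "of_int m * L > 0" using m by simp
  then have "m > 0" using Lpos by (simp add: zero_less_mult_iff)
  then have mL: "s 0 0 + L \<le> s 0 3" using m Lpos by simp
  have cover: "\<exists>\<tau>. \<gamma> x = B 0 \<tau>" for x
  proof -
    define a where "a = s 0 0"
    define n where "n = \<lfloor>(x - a) / L\<rfloor>"
    define y where "y = x - of_int n * L"
    have n1: "of_int n \<le> (x - a) / L" unfolding n_def by simp
    have n2: "(x - a) / L < of_int n + 1" unfolding n_def by simp
    have ya: "a \<le> y" using n1 Lpos unfolding y_def by (simp add: field_simps)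
    have yb: "y \<le> s 0 3" using n2 Lpos mL unfolding y_def a_def by (simp add: field_simps)
    obtain \<tau> where "0 \<le> \<tau>" "\<tau> \<le> 3" "s 0 \<tau> = y"
      using IVT[of "s 0" 0 y 3] ya yb s0cont unfolding a_def by auto
    moreover have "\<gamma> x = \<gamma> y"
      using per_int[of \<gamma> L y n, OF gper] unfolding y_def by simp
    ultimately show ?thesis unfolding B_def by auto
  qed
  have sub: "range \<gamma> \<subseteq> sphere c0 r"
  proof
    fix z assume "z \<in> range \<gamma>"
    then obtain x where "z = \<gamma> x" by auto
    then obtain \<tau> where "z = B 0 \<tau>" using cover by auto
    then show "z \<in> sphere c0 r" using rad[of \<tau>] by (simp add: dist_norm norm_minus_commute)
  qed
  have onc: "cmod (\<gamma> x - c0) = r" for x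
  proof -
    have "\<gamma> x \<in> sphere c0 r" using sub by blast
    then show ?thesis by (simp add: dist_norm norm_minus_commute)
  qed
  have sup: "sphere c0 r \<subseteq> range \<gamma>"
  proof
    fix q assume q: "q \<in> sphere c0 r"
    show "q \<in> range \<gamma>"
    proof (rule ccontr)
      assume nq: "q \<notin> range \<gamma>"
      have qr: "cmod (q - c0) = r" using q by (simp add: dist_norm norm_minus_commute)
      have qc: "q - c0 \<noteq> 0" using qr rpos by auto
      define \<phi> where "\<phi> = (\<lambda>x. (\<gamma> x - c0) / (q - c0))"
      define h where "h = (\<lambda>z::complex. \<i>*(1+z)/(1-z))"
      define g where "g = h \<circ> \<phi>"
      have \<phi>1: "cmod (\<phi> x) = 1" for x unfolding \<phi>_def using onc qr rpos by (simp add: norm_divide)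
      have \<phi>n: "\<phi> x \<noteq> 1" for x
      proof
        assume "\<phi> x = 1"
        then have "\<gamma> x = q" unfolding \<phi>_def using qc by (simp add: field_simps)
        then show False using nq by auto
      qed
      have \<phi>d: "(\<phi> has_vector_derivative (vderiv \<gamma> x / (q - c0))) (at x)" for x
        unfolding \<phi>_def
        by (intro has_vector_derivative_divide) (simp add: has_vector_derivative_diff_const gvd)
      have gd: "(g has_vector_derivative (vderiv \<gamma> x / (q - c0) * (2*\<i>/(1 - \<phi> x)^2))) (at x)" for x
        unfolding g_def h_def by (rule field_vector_diff_chain_at[OF \<phi>d cayley_deriv[OF \<phi>n]])
      have gIm: "Im (g x) = 0" for x unfolding g_def h_def o_def by (rule cayley_real[OF \<phi>1 \<phi>n])
      define G where "G = (\<lambda>x. Re (g x))"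
      have Gd: "DERIV G x :> Re (vderiv \<gamma> x / (q - c0) * (2*\<i>/(1 - \<phi> x)^2))" for x
        using gd[of x] unfolding G_def has_vector_derivative_complex_iff by blast
      have Imd: "DERIV (\<lambda>x. Im (g x)) x :> Im (vderiv \<gamma> x / (q - c0) * (2*\<i>/(1 - \<phi> x)^2))" for x
        using gd[of x] unfolding has_vector_derivative_complex_iff by blast
      have Gper: "G (t + L) = G t" for t unfolding G_def g_def \<phi>_def o_def using gper by simp
      have Gcont: "continuous_on {0..L} G"
        using Gd DERIV_isCont by (intro continuous_at_imp_continuous_on) blast
      obtain x0 where x0: "x0 \<in> {0..L}" "\<forall>y\<in>{0..L}. G y \<le> G x0"
        using continuous_attains_sup[OF compact_Icc _ Gcont] Lpos by auto
      have gmax: "G y \<le> G x0" for y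
      proof -
        define n where "n = \<lfloor>y / L\<rfloor>"
        define y' where "y' = y - of_int n * L"
        have n1: "of_int n \<le> y / L" unfolding n_def by simp
        have n2: "y / L < of_int n + 1" unfolding n_def by simp
        have "y' \<in> {0..L}" using n1 n2 Lpos unfolding y'_def by (simp add: field_simps)
        moreover have "G y = G y'" using per_int[of G L y' n, OF Gper] unfolding y'_def by simp
        ultimately show ?thesis using x0 by auto
      qed
      have re0: "Re (vderiv \<gamma> x0 / (q - c0) * (2*\<i>/(1 - \<phi> x0)^2)) = 0"
        by (rule DERIV_local_max[OF Gd, of 1]) (use gmax in auto)
      have "(\<lambda>x. Im (g x)) = (\<lambda>x. 0)" using gIm by auto
      then have "DERIV (\<lambda>x. 0) x0 :> Im (vderiv \<gamma> x0 / (q - c0) * (2*\<i>/(1 - \<phi> x0)^2))"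
        using Imd[of x0] by simp
      then have im0: "Im (vderiv \<gamma> x0 / (q - c0) * (2*\<i>/(1 - \<phi> x0)^2)) = 0"
        using DERIV_const DERIV_unique by metis
      have "vderiv \<gamma> x0 / (q - c0) * (2*\<i>/(1 - \<phi> x0)^2) = 0"
        using re0 im0 by (simp add: complex_eq_iff)
      then have "vderiv \<gamma> x0 = 0" using qc \<phi>n[of x0] by auto
      then show False using reg by blast
    qed
  qed
  show ?thesis using sub sup rpos by blast
qed


end
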